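(* Let $\mathcal{R}$ be a set of nontrivial rules on a finite set $Q$, and let $\mathcal{C}=\{(A\cup\{q\},q): (A,q)\in\mathcal{R}\}$. Then $\mathcal{A}(\mathcal{R})=\mathcal{L}(\mathcal{C})$.
   Context: A rule on $Q$ is a pair $(A,q)$ with $A\subseteq Q$, $q\in Q$; it is nontrivial if $q\notin A$. It accepts $X\subseteq Q$ if $q\in X$ implies $X\cap A\neq\emptyset$. $\mathcal{K}(\mathcal{R})$ is the family of subsets of $Q$ accepted by all rules of $\mathcal{R}$, and $\mathcal{A}(\mathcal{R})$ is the family of $K\in\mathcal{K}(\mathcal{R})$ for which there is a sequence $\emptyset=Y_0\subseteq Y_1\subseteq\dots\subseteq Y_k=K$ of members of $\mathcal{K}(\mathcal{R})$ with $|Y_{i+1}\setminus Y_i|=1$ for all $i$. A rooted set is a pair $(C,r)$ with $C\subseteq Q$ and $r\in C$. For a family $\mathcal{C}$ of rooted sets, $\mathcal{L}(\mathcal{C})$ is the family of subsets $X\subseteq Q$ admitting an ordering $x_1,\dots,x_k$ of the elements of $X$ such that for each $i$, whenever $(C,x_i)\in\mathcal{C}$ one has $C\cap\{x_1,\dots,x_{i-1}\}\neq\emptyset$. *)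

theory Defs
  imports Main
begin

definition rules_on :: "'a set \<Rightarrow> ('a set \<times> 'a) set \<Rightarrow> bool" where
  "rules_on Q R \<longleftrightarrow> (\<forall>(A, q) \<in> R. A \<subseteq> Q \<and> q \<in> Q)"

definition nontrivial_rule :: "('a set \<times> 'a) \<Rightarrow> bool" where
  "nontrivial_rule r \<longleftrightarrow> snd r \<notin> fst r"

definition accepts :: "('a set \<times> 'a) \<Rightarrow> 'a set \<Rightarrow> bool" where
  "accepts r X \<longleftrightarrow> (snd r \<in> X \<longrightarrow> X \<inter> fst r \<noteq> {})"

definition K_fam :: "'a set \<Rightarrow> ('a set \<times> 'a) set \<Rightarrow> 'a set set" where
  "K_fam Q R = {X. X \<subseteq> Q \<and> (\<forall>r \<in> R. accepts r X)}"

definition A_fam :: "'a set \<Rightarrow> ('a set \<times> 'a) set \<Rightarrow> 'a set set" where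
  "A_fam Q R = {K. K \<in> K_fam Q R \<and>
     (\<exists>Y :: nat \<Rightarrow> 'a set. \<exists>k. Y 0 = {} \<and> Y k = K \<and>
        (\<forall>i \<le> k. Y i \<in> K_fam Q R) \<and>
        (\<forall>i < k. Y i \<subseteq> Y (Suc i) \<and> card (Y (Suc i) - Y i) = 1))}"

text \<open>Rooted sets (C, r) with r in C; L_fam as in the paper.\<close>
definition L_fam :: "'a set \<Rightarrow> ('a set \<times> 'a) set \<Rightarrow> 'a set set" where
  "L_fam Q \<C> = {X. X \<subseteq> Q \<and>
     (\<exists>xs. distinct xs \<and> set xs = X \<and>
        (\<forall>i < length xs. \<forall>C. (C, xs ! i) \<in> \<C> \<longrightarrow> C \<inter> set (take i xs) \<noteq> {}))}"

end

theory Submission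
  imports Defs
begin

lemma nth_notin_take:
  assumes "distinct xs" "j < length xs"
  shows "xs ! j \<notin> set (take j xs)"
proof -
  have "xs = take j xs @ xs ! j # drop (Suc j) xs" using assms(2) by (rule id_take_nth_drop)
  then have "distinct (take j xs @ xs ! j # drop (Suc j) xs)" using assms(1) by simp
  thus ?thesis by simp
qed

lemma chain_list:
  fixes Y :: "nat \<Rightarrow> 'a set"
  assumes Y0: "Y 0 = {}"
    and st: "\<forall>i < k. Y i \<subseteq> Y (Suc i) \<and> card (Y (Suc i) - Y i) = 1"
  defines "xs \<equiv> map (\<lambda>i. the_elem (Y (Suc i) - Y i)) [0..<k]"
  shows "i \<le> k \<Longrightarrow> set (take i xs) = Y i \<and> distinct (take i xs)"
proof (induction i)
  case 0
  then show ?case using Y0 by simp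
next
  case (Suc i)
  then have ik: "i < k" by simp
  have lx: "length xs = k" unfolding xs_def by simp
  have nth: "xs ! i = the_elem (Y (Suc i) - Y i)" unfolding xs_def using ik by simp
  from st ik have sub: "Y i \<subseteq> Y (Suc i)" and c: "card (Y (Suc i) - Y i) = 1" by auto
  from c obtain x where x: "Y (Suc i) - Y i = {x}" using card_1_singletonE by blast
  have nx: "xs ! i = x" using nth x by simp
  have tk: "take (Suc i) xs = take i xs @ [xs ! i]" using ik lx by (simp add: take_Suc_conv_app_nth)
  from Suc have IH: "set (take i xs) = Y i \<and> distinct (take i xs)" by simp
  have "x \<notin> Y i" using x by auto
  moreover have "Y (Suc i) = Y i \<union> {x}" using x sub by auto
  ultimately show ?case using tk IH nx by auto
qed

theorem theorem2p4:
  fixes Q :: "'a set" and R :: "('a set \<times> 'a) set"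
  assumes "finite Q"
    and "rules_on Q R"
    and "\<forall>r \<in> R. nontrivial_rule r"
  shows "A_fam Q R = L_fam Q {(A \<union> {q}, q) | A q. (A, q) \<in> R}"
proof
  show "A_fam Q R \<subseteq> L_fam Q {(A \<union> {q}, q) | A q. (A, q) \<in> R}"
  proof
    fix K assume "K \<in> A_fam Q R"
    then obtain Y k where KK: "K \<in> K_fam Q R" and Y0: "Y 0 = {}" and Yk: "Y k = K"
      and YK: "\<forall>i \<le> k. Y i \<in> K_fam Q R"
      and st: "\<forall>i < k. Y i \<subseteq> Y (Suc i) \<and> card (Y (Suc i) - Y i) = 1"
      unfolding A_fam_def mem_Collect_eq by blast
    define xs where "xs = map (\<lambda>i. the_elem (Y (Suc i) - Y i)) [0..<k]"
    have L: "\<And>i. i \<le> k \<Longrightarrow> set (take i xs) = Y i \<and> distinct (take i xs)"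
      using chain_list[OF Y0 st] unfolding xs_def by blast
    have lx: "length xs = k" unfolding xs_def by simp
    have d: "distinct xs" and s: "set xs = K" using L[of k] lx Yk by auto
    have "\<forall>i < length xs. \<forall>C. (C, xs ! i) \<in> {(A \<union> {q}, q) | A q. (A, q) \<in> R} \<longrightarrow> C \<inter> set (take i xs) \<noteq> {}"
    proof (intro allI impI)
      fix i C assume il: "i < length xs" and "(C, xs ! i) \<in> {(A \<union> {q}, q) | A q. (A, q) \<in> R}"
      then obtain A where AR: "(A, xs ! i) \<in> R" and C: "C = A \<union> {xs ! i}" by blast
      have ik: "i < k" using il lx by simp
      have "xs ! i \<in> set (take (Suc i) xs)" using il by (simp add: take_Suc_conv_app_nth)
      hence xin: "xs ! i \<in> Y (Suc i)" using L[of "Suc i"] ik by simp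
      have "Y (Suc i) \<in> K_fam Q R" using YK ik by simp
      hence "Y (Suc i) \<inter> A \<noteq> {}" using AR xin unfolding K_fam_def accepts_def by fastforce
      moreover have "xs ! i \<notin> A" using assms(3) AR unfolding nontrivial_rule_def by fastforce
      moreover have "Y (Suc i) = Y i \<union> {xs ! i}" using L[of "Suc i"] L[of i] ik il
        by (simp add: take_Suc_conv_app_nth)
      ultimately have "Y i \<inter> A \<noteq> {}" by auto
      thus "C \<inter> set (take i xs) \<noteq> {}" using L[of i] ik C by auto
    qed
    moreover have "K \<subseteq> Q" using KK unfolding K_fam_def by simp
    ultimately show "K \<in> L_fam Q {(A \<union> {q}, q) | A q. (A, q) \<in> R}"
      unfolding L_fam_def mem_Collect_eq
      apply (intro conjI exI[of _ xs])
      using d s by auto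
  qed
next
  show "L_fam Q {(A \<union> {q}, q) | A q. (A, q) \<in> R} \<subseteq> A_fam Q R"
  proof
    fix X assume "X \<in> L_fam Q {(A \<union> {q}, q) | A q. (A, q) \<in> R}"
    then have "X \<subseteq> Q \<and> (\<exists>xs. distinct xs \<and> set xs = X \<and>
        (\<forall>i < length xs. \<forall>C. (C, xs ! i) \<in> {(A \<union> {q}, q) | A q. (A, q) \<in> R} \<longrightarrow> C \<inter> set (take i xs) \<noteq> {}))"
      unfolding L_fam_def mem_Collect_eq .
    note H = this
    then have XQ: "X \<subseteq> Q" by (rule conjunct1)
    obtain xs where H2: "distinct xs \<and> set xs = X \<and>
        (\<forall>i < length xs. \<forall>C. (C, xs ! i) \<in> {(A \<union> {q}, q) | A q. (A, q) \<in> R} \<longrightarrow> C \<inter> set (take i xs) \<noteq> {})"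
      apply (rule exE[OF conjunct2[OF H]]) apply (rule that) by assumption
    have d: "distinct xs" using H2 by (rule conjunct1)
    have s: "set xs = X" using H2 by (rule conjunct2[THEN conjunct1])
    have c: "\<forall>i < length xs. \<forall>C. (C, xs ! i) \<in> {(A \<union> {q}, q) | A q. (A, q) \<in> R} \<longrightarrow> C \<inter> set (take i xs) \<noteq> {}"
      using H2 by (rule conjunct2[THEN conjunct2])
    define Y where "Y = (\<lambda>i. set (take i xs))"
    have YK: "Y i \<in> K_fam Q R" for i
      unfolding K_fam_def accepts_def
    proof (intro CollectI conjI ballI impI)
      have "set (take i xs) \<subseteq> set xs" by (rule set_take_subset)
      then show "Y i \<subseteq> Q" unfolding Y_def using XQ s by simp
    next
      fix r assume rR: "r \<in> R" and "snd r \<in> Y i"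
      then obtain j where j: "j < min i (length xs)" and xj: "xs ! j = snd r"
        unfolding Y_def by (auto simp: in_set_conv_nth)
      obtain A q where r: "r = (A, q)" by (cases r)
      have AqR: "(A, q) \<in> R" using rR r by simp
      have mem: "(A \<union> {q}, xs ! j) \<in> {(A \<union> {q}, q) | A q. (A, q) \<in> R}"
        unfolding xj r snd_conv using AqR by blast
      have jl: "j < length xs" using j by simp
      have "(A \<union> {q}) \<inter> set (take j xs) \<noteq> {}" by (rule c[rule_format, OF jl mem])
      moreover have "q \<notin> set (take j xs)" using nth_notin_take[OF d, of j] j xj r by simp
      ultimately have "A \<inter> set (take j xs) \<noteq> {}" by auto
      moreover have "set (take j xs) \<subseteq> Y i" unfolding Y_def using j
        by (simp add: set_take_subset_set_take)
      ultimately show "Y i \<inter> fst r \<noteq> {}" using r by auto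
    qed
    have "\<forall>i < length xs. Y i \<subseteq> Y (Suc i) \<and> card (Y (Suc i) - Y i) = 1"
    proof (intro allI impI)
      fix i assume i: "i < length xs"
      have tk: "take (Suc i) xs = take i xs @ [xs ! i]" using i by (simp add: take_Suc_conv_app_nth)
      have "xs ! i \<notin> set (take i xs)" using nth_notin_take[OF d i] .
      hence "Y (Suc i) - Y i = {xs ! i}" unfolding Y_def using tk by auto
      moreover have "Y i \<subseteq> Y (Suc i)" unfolding Y_def using tk by auto
      ultimately show "Y i \<subseteq> Y (Suc i) \<and> card (Y (Suc i) - Y i) = 1" by simp
    qed
    note st = this
    have Y0: "Y 0 = {}" unfolding Y_def by simp
    have Yk: "Y (length xs) = X" unfolding Y_def using s by simp
    have XK: "X \<in> K_fam Q R" using YK[of "length xs"] Yk by simp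
    have YK2: "\<forall>i \<le> length xs. Y i \<in> K_fam Q R" using YK by blast
    show "X \<in> A_fam Q R" unfolding A_fam_def mem_Collect_eq
      apply (rule conjI[OF XK])
      apply (rule exI[of _ Y], rule exI[of _ "length xs"])
      using Y0 Yk YK2 st by (intro conjI)
  qed
qed

end
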